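(* Let $d\ge2$ and let $\{\tau_e\}$ be i.i.d. non-negative edge weights on $\mathbb Z^d$. Fix $M>0$ and $k\in\mathbb N$. There exist constants $C>0$ and $C'\ge1$, depending only on $k$ and $d$, such that for every $e\in\mathcal E^d$, $$\mathbb P(e\text{ is }(k,M)\text{-large})\ \le\ C\,\big(\mathbb P(\tau_e\ge M/C')^{k}\big)^{d-1}.$$
   Context: $\mathcal E^d$ is the set of nearest-neighbor edges of $\mathbb Z^d$. For $e=\{a,b\}$ let $v_e$ be the endpoint of smaller $\ell^1$ norm. For $k\ge1$: ${S^e_k}'=\{z\in\mathbb Z^d:|v_e-z|_\infty=k\}$ and $S^e_k=\{\{u,w\}\in\mathcal E^d:u,w\in{S^e_k}'\}$; ${S^e_0}'$ is the set of endpoints of $e$ and $S^e_0=\{e\}$. For $u,w\in{S^e_h}'$, $T_{S^e_h}(u,w)$ is the minimum of $\sum_{e'\in\gamma}\tau_{e'}$ over self-avoiding paths $\gamma$ from $u$ to $w$ using only edges of $S^e_h$. The edge $e$ is $(k,M)$-large if for each $h=0,1,\dots,k$ there exist $u,w\in{S^e_h}'$ with $T_{S^e_h}(u,w)\ge M$. *)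

theory Defs
  imports "HOL-Probability.Probability"
begin

text \<open>Vertices of Z^d are integer lists of length d; edges are two-element sets of vertices.\<close>

type_synonym vtx = "int list"
type_synonym edge = "int list set"

definition Zd :: "nat \<Rightarrow> vtx set" where
  "Zd d = {x. length x = d}"

definition l1norm :: "vtx \<Rightarrow> int" where
  "l1norm x = sum_list (map abs x)"

definition linfnorm :: "vtx \<Rightarrow> int" where
  "linfnorm x = Max (insert 0 (set (map abs x)))"

definition vdiff :: "vtx \<Rightarrow> vtx \<Rightarrow> vtx" where
  "vdiff a b = map2 (-) a b"

definition Ed :: "nat \<Rightarrow> edge set" where
  "Ed d = {{a, b} | a b. a \<in> Zd d \<and> b \<in> Zd d \<and> l1norm (vdiff a b) = 1}"

definition ve :: "edge \<Rightarrow> vtx" where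
  "ve e = (SOME a. a \<in> e \<and> (\<forall>b\<in>e. l1norm a \<le> l1norm b))"

definition sphV :: "nat \<Rightarrow> edge \<Rightarrow> nat \<Rightarrow> vtx set" where
  "sphV d e k = (if k = 0 then e
     else {z \<in> Zd d. linfnorm (vdiff (ve e) z) = int k})"

definition sphE :: "nat \<Rightarrow> edge \<Rightarrow> nat \<Rightarrow> edge set" where
  "sphE d e k = (if k = 0 then {e}
     else {{u, w} | u w. {u, w} \<in> Ed d \<and> u \<in> sphV d e k \<and> w \<in> sphV d e k})"

definition saw :: "edge set \<Rightarrow> vtx \<Rightarrow> vtx \<Rightarrow> vtx list \<Rightarrow> bool" where
  "saw S u w p \<longleftrightarrow> p \<noteq> [] \<and> hd p = u \<and> last p = w \<and> distinct p \<and>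
     (\<forall>i < length p - 1. {p ! i, p ! Suc i} \<in> S)"

definition path_weight :: "(edge \<Rightarrow> real) \<Rightarrow> vtx list \<Rightarrow> real" where
  "path_weight t p = (\<Sum>i < length p - 1. t {p ! i, p ! Suc i})"

definition passT :: "(edge \<Rightarrow> real) \<Rightarrow> edge set \<Rightarrow> vtx \<Rightarrow> vtx \<Rightarrow> real" where
  "passT t S u w = Inf {path_weight t p | p. saw S u w p}"

definition large :: "nat \<Rightarrow> (edge \<Rightarrow> real) \<Rightarrow> edge \<Rightarrow> nat \<Rightarrow> real \<Rightarrow> bool" where
  "large d t e k M \<longleftrightarrow> (\<forall>h \<le> k. \<exists>u \<in> sphV d e h. \<exists>w \<in> sphV d e h.
      passT t (sphE d e h) u w \<ge> M)"

end

theory Submission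
  imports Defs
begin


definition ibox :: "nat \<Rightarrow> (nat \<Rightarrow> int) \<Rightarrow> (nat \<Rightarrow> int) \<Rightarrow> vtx set" where
  "ibox d lo hi = {z. length z = d \<and> (\<forall>j<d. lo j \<le> z!j \<and> z!j \<le> hi j)}"

definition stp :: "vtx \<Rightarrow> nat \<Rightarrow> vtx" where
  "stp x j = x[j := x!j + 1]"

definition bedges :: "nat \<Rightarrow> (nat \<Rightarrow> int) \<Rightarrow> (nat \<Rightarrow> int) \<Rightarrow> vtx set \<Rightarrow> edge set" where
  "bedges d lo hi A = {{x, stp x j} | x j. j < d \<and> x \<in> ibox d lo hi \<and> stp x j \<in> ibox d lo hi
      \<and> (x \<in> A \<longleftrightarrow> stp x j \<notin> A)}"

lemma discrete_ivt:
  fixes f :: "int \<Rightarrow> bool"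
  shows "a \<le> b \<Longrightarrow> f a \<noteq> f b \<Longrightarrow> \<exists>t. a \<le> t \<and> t < b \<and> f t \<noteq> f (t+1)"
proof (induction "nat (b - a)" arbitrary: a)
  case 0
  then show ?case by auto
next
  case (Suc n)
  show ?case
  proof (cases "f a = f (a+1)")
    case True
    with Suc.prems have "f (a+1) \<noteq> f b" by simp
    moreover have "a + 1 \<le> b" using Suc by linarith
    moreover have "n = nat (b - (a+1))" using Suc by linarith
    ultimately obtain t where "a+1 \<le> t" "t < b" "f t \<noteq> f (t+1)" using Suc.hyps by blast
    then show ?thesis by (intro exI[of _ t]) auto
  next
    case False
    then show ?thesis using Suc by (intro exI[of _ a]) auto
  qed
qed

lemma finite_box: "finite (ibox d lo hi)"
proof -
  have "ibox d lo hi \<subseteq> {xs. set xs \<subseteq> (\<Union>j<d. {lo j..hi j}) \<and> length xs = d}"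
    by (fastforce simp: ibox_def in_set_conv_nth)
  then show ?thesis by (rule finite_subset) (intro finite_lists_length_eq, auto)
qed

lemma finite_bedges: "finite (bedges d lo hi A)"
proof -
  have "bedges d lo hi A \<subseteq> Pow (ibox d lo hi)" by (auto simp: bedges_def)
  then show ?thesis using finite_box by (meson finite_Pow_iff finite_subset)
qed

lemma stp_len[simp]: "length (stp x j) = length x" by (simp add: stp_def)

lemma stp_nth: "i < length x \<Longrightarrow> stp x j ! i = (if i = j then x!i + 1 else x!i)"
  by (simp add: stp_def nth_list_update)

lemma stp_ne: "j < length x \<Longrightarrow> stp x j \<noteq> x"
proof
  assume "j < length x" "stp x j = x"
  then have "stp x j ! j = x ! j" by simp
  then show False using \<open>j < length x\<close> by (simp add: stp_nth)
qed

lemma edge_inj: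
  assumes "j < length a" "j' < length b" "length a = length b" "{a, stp a j} = {b, stp b j'}"
  shows "j = j' \<and> a = b"
proof -
  have c: "a = b \<and> stp a j = stp b j' \<or> a = stp b j' \<and> stp a j = b"
    using assms(4) by (auto simp: doubleton_eq_iff)
  show ?thesis
  proof (cases "a = b \<and> stp a j = stp b j'")
    case True
    then have ab: "a = b" and s: "stp a j = stp b j'" by blast+
    from s have "stp a j = stp a j'" unfolding ab .
    then have "stp a j ! j = stp a j' ! j" by simp
    then have "j = j'" using assms by (auto simp: stp_nth split: if_splits)
    then show ?thesis using ab by simp
  next
    case False
    with c have "a = stp b j'" "stp a j = b" by auto
    then have "a ! j = stp (stp a j) j' ! j" by simp
    then show ?thesis using assms by (auto simp: stp_nth split: if_splits)
  qed
qed


lemma ibox_upd: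
  assumes "x \<in> ibox d lo hi" "j < d" "lo j \<le> v" "v \<le> hi j"
  shows "x[j := v] \<in> ibox d lo hi"
  using assms by (auto simp: ibox_def nth_list_update)

lemma sat_or_mixed:
  assumes "j < d"
  shows "(\<forall>x\<in>ibox d lo hi. \<forall>v. lo j \<le> v \<and> v \<le> hi j \<longrightarrow> (x \<in> A \<longleftrightarrow> x[j:=v] \<in> A))
    \<or> (\<exists>x. x \<in> ibox d lo hi \<and> stp x j \<in> ibox d lo hi \<and> (x \<in> A \<longleftrightarrow> stp x j \<notin> A))"
proof (rule disjCI)
  assume "\<not> (\<exists>x. x \<in> ibox d lo hi \<and> stp x j \<in> ibox d lo hi \<and> (x \<in> A \<longleftrightarrow> stp x j \<notin> A))"
  then have nm: "\<And>x. x \<in> ibox d lo hi \<Longrightarrow> stp x j \<in> ibox d lo hi \<Longrightarrow> (x \<in> A \<longleftrightarrow> stp x j \<in> A)"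
    by blast
  show "\<forall>x\<in>ibox d lo hi. \<forall>v. lo j \<le> v \<and> v \<le> hi j \<longrightarrow> (x \<in> A \<longleftrightarrow> x[j:=v] \<in> A)"
  proof (intro ballI allI impI)
    fix x v assume x: "x \<in> ibox d lo hi" and v: "lo j \<le> v \<and> v \<le> hi j"
    have len: "length x = d" and xr: "lo j \<le> x!j" "x!j \<le> hi j" using x assms by (auto simp: ibox_def)
    define f where "f t = (x[j:=t] \<in> A)" for t
    have fx: "f (x!j) = (x \<in> A)" by (simp add: f_def)
    have key: "f a = f b" if ab: "lo j \<le> a" "a \<le> b" "b \<le> hi j" for a b
    proof (rule ccontr)
      assume "f a \<noteq> f b"
      then obtain t where t: "a \<le> t" "t < b" "f t \<noteq> f (t+1)" using discrete_ivt[OF ab(2)] by blast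
      let ?y = "x[j:=t]"
      have y: "?y \<in> ibox d lo hi" using ibox_upd[OF x assms, of t] t ab by simp
      have sy: "stp ?y j = x[j:=t+1]" using len assms by (simp add: stp_def)
      have sy2: "stp ?y j \<in> ibox d lo hi" unfolding sy using ibox_upd[OF x assms, of "t+1"] t ab by simp
      from nm[OF y sy2] t(3) show False unfolding sy f_def by simp
    qed
    have "f (x!j) = f v"
    proof (cases "x!j \<le> v")
      case True then show ?thesis using key[of "x!j" v] xr v by simp
    next
      case False then show ?thesis using key[of v "x!j"] xr v by simp
    qed
    then show "x \<in> A \<longleftrightarrow> x[j:=v] \<in> A" using fx by (simp add: f_def)
  qed
qed

lemma take_drop_nth:
  assumes "length x = d" "length y = d" "n \<le> d" "i < d"
  shows "(take n y @ drop n x) ! i = (if i < n then y!i else x!i)"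
  using assms by (auto simp: nth_append)

lemma all_sat:
  assumes sat: "\<And>j. j < d \<Longrightarrow> lo j < hi j \<Longrightarrow>
      (\<forall>x\<in>ibox d lo hi. \<forall>v. lo j \<le> v \<and> v \<le> hi j \<longrightarrow> (x \<in> A \<longleftrightarrow> x[j:=v] \<in> A))"
    and x: "x \<in> ibox d lo hi" and y: "y \<in> ibox d lo hi"
  shows "x \<in> A \<longleftrightarrow> y \<in> A"
proof -
  have lx: "length x = d" and ly: "length y = d" using x y by (auto simp: ibox_def)
  define z where "z n = take n y @ drop n x" for n
  have "n \<le> d \<Longrightarrow> z n \<in> ibox d lo hi \<and> (z n \<in> A \<longleftrightarrow> x \<in> A)" for n
  proof (induction n)
    case 0 then show ?case using x by (simp add: z_def)
  next
    case (Suc n)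
    then have IH: "z n \<in> ibox d lo hi" "z n \<in> A \<longleftrightarrow> x \<in> A" and n: "n < d" by auto
    have lz: "length (z n) = d" using IH by (simp add: ibox_def)
    have zeq: "z (Suc n) = (z n)[n := y!n]"
    proof (rule nth_equalityI)
      show "length (z (Suc n)) = length ((z n)[n := y ! n])" using lx ly n lz by (simp add: z_def)
      fix i assume "i < length (z (Suc n))"
      then have i: "i < d" using lx ly n by (simp add: z_def)
      show "z (Suc n) ! i = (z n)[n := y ! n] ! i"
        using take_drop_nth[OF lx ly _ i, of "Suc n"] take_drop_nth[OF lx ly _ i, of n] n i lz
        by (auto simp: z_def nth_list_update)
    qed
    have yr: "lo n \<le> y!n" "y!n \<le> hi n" using y n by (auto simp: ibox_def)
    show ?case
    proof (cases "lo n < hi n")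
      case True
      have "z n \<in> A \<longleftrightarrow> (z n)[n := y!n] \<in> A" using sat[OF n True] IH(1) yr by blast
      then show ?thesis using IH zeq ibox_upd[OF IH(1) n yr] by simp
    next
      case False
      then have "y!n = z n ! n" using yr IH(1) n by (auto simp: ibox_def)
      then have "(z n)[n := y!n] = z n" by simp
      then show ?thesis using IH zeq by simp
    qed
  qed
  from this[of d] have "z d \<in> A \<longleftrightarrow> x \<in> A" by simp
  moreover have "z d = y" using lx ly by (simp add: z_def)
  ultimately show ?thesis by simp
qed


lemma box_boundary:
  assumes x1: "x1 \<in> ibox d lo hi" "x1 \<in> A" and y1: "y1 \<in> ibox d lo hi" "y1 \<notin> A"
  shows "card {j. j < d \<and> lo j < hi j} \<le> card (bedges d lo hi A)"
proof -
  define B where "B = ibox d lo hi"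
  define sat where "sat j \<longleftrightarrow> (\<forall>x\<in>B. \<forall>v. lo j \<le> v \<and> v \<le> hi j \<longrightarrow> (x \<in> A \<longleftrightarrow> x[j:=v] \<in> A))" for j
  define mixed where "mixed j x \<longleftrightarrow> x \<in> B \<and> stp x j \<in> B \<and> (x \<in> A \<longleftrightarrow> stp x j \<notin> A)" for j x
  define D where "D = {j. j < d \<and> lo j < hi j}"
  define J where "J = {j\<in>D. sat j}"
  have mix: "\<exists>x. mixed j x" if "j \<in> D" "j \<notin> J" for j
    using sat_or_mixed[of j d lo hi A] that unfolding D_def J_def sat_def mixed_def B_def by auto
  have "D - J \<noteq> {}"
  proof
    assume "D - J = {}"
    then have "\<And>j. j < d \<Longrightarrow> lo j < hi j \<Longrightarrow> sat j" unfolding D_def J_def by blast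
    then have "x1 \<in> A \<longleftrightarrow> y1 \<in> A" using all_sat[of d lo hi A x1 y1] x1 y1 unfolding sat_def B_def by blast
    then show False using x1 y1 by simp
  qed
  then obtain i where i: "i \<in> D" "i \<notin> J" by blast
  define xs where "xs j = (SOME x. mixed j x)" for j
  have xs: "mixed j (xs j)" if "j \<in> D" "j \<notin> J" for j
    unfolding xs_def using mix[OF that] by (rule someI_ex)
  define x0 where "x0 = xs i"
  have x0: "mixed i x0" unfolding x0_def using xs[OF i] .
  have lx0: "length x0 = d" using x0 by (simp add: mixed_def B_def ibox_def)
  have id: "i < d" using i by (simp add: D_def)
  define vv where "vv j = (if x0!j = lo j then hi j else lo j)" for j
  have vv: "lo j \<le> vv j \<and> vv j \<le> hi j \<and> vv j \<noteq> x0!j" if "j \<in> D" for j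
    using that by (auto simp: vv_def D_def)
  define g where "g j = (if j \<in> J then {x0[j := vv j], stp (x0[j := vv j]) i} else {xs j, stp (xs j) j})" for j
  have sw: "stp (x0[j := vv j]) i = (stp x0 i)[j := vv j]" if "j \<in> J" for j
  proof -
    have "i \<noteq> j" using i that by auto
    then show ?thesis by (simp add: stp_def list_update_swap)
  qed
  have gsub: "g ` D \<subseteq> bedges d lo hi A"
  proof
    fix f assume "f \<in> g ` D"
    then obtain j where j: "j \<in> D" "f = g j" by blast
    show "f \<in> bedges d lo hi A"
    proof (cases "j \<in> J")
      case True
      have jd: "j < d" using j by (simp add: D_def)
      have s: "sat j" using True by (simp add: J_def)
      have m0: "x0 \<in> B" "stp x0 i \<in> B" "x0 \<in> A \<longleftrightarrow> stp x0 i \<notin> A" using x0 by (auto simp: mixed_def)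
      have a1: "x0[j := vv j] \<in> B" using ibox_upd[of x0 d lo hi j "vv j"] m0 vv[OF j(1)] jd by (simp add: B_def)
      have a2: "stp (x0[j := vv j]) i \<in> B" unfolding sw[OF True]
        using ibox_upd[of "stp x0 i" d lo hi j "vv j"] m0 vv[OF j(1)] jd by (simp add: B_def)
      have a3: "x0 \<in> A \<longleftrightarrow> x0[j := vv j] \<in> A" using s m0(1) vv[OF j(1)] unfolding sat_def by blast
      have a4: "stp x0 i \<in> A \<longleftrightarrow> stp (x0[j := vv j]) i \<in> A" unfolding sw[OF True]
        using s m0(2) vv[OF j(1)] unfolding sat_def by blast
      show ?thesis unfolding bedges_def j(2) g_def using True a1 a2 a3 a4 m0(3) id
        by (auto simp: B_def)
    next
      case False
      have jd: "j < d" using j by (simp add: D_def)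
      have "mixed j (xs j)" using xs[OF j(1) False] .
      then show ?thesis unfolding bedges_def j(2) g_def using False jd
        by (auto simp: B_def mixed_def)
    qed
  qed
  have lxs: "length (xs j) = d" if "j \<in> D" "j \<notin> J" for j
    using xs[OF that] by (simp add: mixed_def B_def ibox_def)
  have ginj: "inj_on g D"
  proof (rule inj_onI)
    fix j1 j2 assume j1: "j1 \<in> D" and j2: "j2 \<in> D" and eq: "g j1 = g j2"
    have j1d: "j1 < d" and j2d: "j2 < d" using j1 j2 by (auto simp: D_def)
    show "j1 = j2"
    proof (cases "j1 \<in> J"; cases "j2 \<in> J")
      assume a: "j1 \<in> J" "j2 \<in> J"
      then have "{x0[j1 := vv j1], stp (x0[j1 := vv j1]) i} = {x0[j2 := vv j2], stp (x0[j2 := vv j2]) i}"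
        using eq by (simp add: g_def)
      then have e: "x0[j1 := vv j1] = x0[j2 := vv j2]" using edge_inj[of i "x0[j1 := vv j1]" i "x0[j2 := vv j2]"] lx0 id
        by simp
      show "j1 = j2"
      proof (rule ccontr)
        assume "j1 \<noteq> j2"
        then have "x0[j1 := vv j1] ! j1 = vv j1" "x0[j2 := vv j2] ! j1 = x0 ! j1" using lx0 j1d by auto
        then show False using e vv[OF j1] by simp
      qed
    next
      assume a: "j1 \<in> J" "j2 \<notin> J"
      then have "{x0[j1 := vv j1], stp (x0[j1 := vv j1]) i} = {xs j2, stp (xs j2) j2}"
        using eq by (simp add: g_def)
      then have "i = j2 \<and> x0[j1 := vv j1] = xs j2"
        using edge_inj[of i "x0[j1 := vv j1]" j2 "xs j2"] lx0 id lxs[OF j2 a(2)] j2d by simp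
      then have ij: "i = j2" and e: "x0[j1 := vv j1] = xs j2" by blast+
      have "xs j2 = x0" using ij by (simp add: x0_def)
      with e have "x0[j1 := vv j1] = x0" by simp
      then have "x0[j1 := vv j1] ! j1 = x0 ! j1" by simp
      then show "j1 = j2" using vv[OF j1] lx0 j1d by simp
    next
      assume a: "j1 \<notin> J" "j2 \<in> J"
      then have "{x0[j2 := vv j2], stp (x0[j2 := vv j2]) i} = {xs j1, stp (xs j1) j1}"
        using eq by (simp add: g_def)
      then have "i = j1 \<and> x0[j2 := vv j2] = xs j1"
        using edge_inj[of i "x0[j2 := vv j2]" j1 "xs j1"] lx0 id lxs[OF j1 a(1)] j1d by simp
      then have ij: "i = j1" and e: "x0[j2 := vv j2] = xs j1" by blast+
      have "xs j1 = x0" using ij by (simp add: x0_def)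
      with e have "x0[j2 := vv j2] = x0" by simp
      then have "x0[j2 := vv j2] ! j2 = x0 ! j2" by simp
      then show "j1 = j2" using vv[OF j2] lx0 j2d by simp
    next
      assume a: "j1 \<notin> J" "j2 \<notin> J"
      then have "{xs j1, stp (xs j1) j1} = {xs j2, stp (xs j2) j2}"
        using eq by (simp add: g_def)
      then show "j1 = j2" using edge_inj[of j1 "xs j1" j2 "xs j2"] lxs[OF j1 a(1)] lxs[OF j2 a(2)] j1d j2d
        by simp
    qed
  qed
  have "card D = card (g ` D)" using ginj by (simp add: card_image)
  also have "\<dots> \<le> card (bedges d lo hi A)" using gsub finite_bedges by (rule card_mono[rotated])
  finally show ?thesis unfolding D_def .
qed



lemma ve_props:
  assumes "e \<in> Ed d"
  shows "ve e \<in> e" "length (ve e) = d"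
proof -
  obtain a b where e: "e = {a, b}" "a \<in> Zd d" "b \<in> Zd d" using assms by (auto simp: Ed_def)
  have "\<exists>x. x \<in> e \<and> (\<forall>y\<in>e. l1norm x \<le> l1norm y)"
  proof (cases "l1norm a \<le> l1norm b")
    case True then show ?thesis by (intro exI[of _ a]) (auto simp: e)
  next
    case False then show ?thesis by (intro exI[of _ b]) (auto simp: e)
  qed
  then have "ve e \<in> e \<and> (\<forall>y\<in>e. l1norm (ve e) \<le> l1norm y)" unfolding ve_def by (rule someI_ex)
  then show "ve e \<in> e" by blast
  then show "length (ve e) = d" using e by (auto simp: Zd_def)
qed

lemma linf_eq:
  assumes "h > 0"
  shows "linfnorm v = h \<longleftrightarrow> (\<forall>x\<in>set v. \<bar>x\<bar> \<le> h) \<and> (\<exists>x\<in>set v. \<bar>x\<bar> = h)"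
proof -
  have "linfnorm v = Max (insert 0 (abs ` set v))" by (simp add: linfnorm_def)
  also have "\<dots> = h \<longleftrightarrow> h \<in> insert 0 (abs ` set v) \<and> (\<forall>a\<in>insert 0 (abs ` set v). a \<le> h)"
    by (rule Max_eq_iff) auto
  finally show ?thesis using assms by auto
qed

lemma vdiff_nth: "length a = length b \<Longrightarrow> i < length a \<Longrightarrow> vdiff a b ! i = a!i - b!i"
  by (simp add: vdiff_def)

lemma vdiff_len: "length a = length b \<Longrightarrow> length (vdiff a b) = length a"
  by (simp add: vdiff_def)

lemma sphV_iff:
  assumes "h \<ge> 1" "length c = d" "c = ve e"
  shows "z \<in> sphV d e h \<longleftrightarrow> length z = d \<and> (\<forall>j<d. \<bar>c!j - z!j\<bar> \<le> int h) \<and> (\<exists>j<d. \<bar>c!j - z!j\<bar> = int h)"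
proof -
  have h: "int h > 0" using assms by simp
  have "z \<in> sphV d e h \<longleftrightarrow> length z = d \<and> linfnorm (vdiff c z) = int h"
    using assms by (simp add: sphV_def Zd_def)
  also have "\<dots> \<longleftrightarrow> length z = d \<and> (\<forall>j<d. \<bar>c!j - z!j\<bar> \<le> int h) \<and> (\<exists>j<d. \<bar>c!j - z!j\<bar> = int h)"
  proof (cases "length z = d")
    case True
    have l: "length c = length z" using True assms by simp
    have A: "(\<forall>x\<in>set (vdiff c z). \<bar>x\<bar> \<le> int h) \<longleftrightarrow> (\<forall>j<d. \<bar>c!j - z!j\<bar> \<le> int h)"
    proof
      assume a: "\<forall>x\<in>set (vdiff c z). \<bar>x\<bar> \<le> int h"
      show "\<forall>j<d. \<bar>c!j - z!j\<bar> \<le> int h"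
      proof (intro allI impI)
        fix j assume "j < d"
        then have "vdiff c z ! j \<in> set (vdiff c z)" using l assms by (simp add: vdiff_len)
        then show "\<bar>c!j - z!j\<bar> \<le> int h" using a \<open>j < d\<close> l assms by (simp add: vdiff_nth)
      qed
    next
      assume a: "\<forall>j<d. \<bar>c!j - z!j\<bar> \<le> int h"
      show "\<forall>x\<in>set (vdiff c z). \<bar>x\<bar> \<le> int h"
      proof
        fix x assume "x \<in> set (vdiff c z)"
        then obtain j where "j < length (vdiff c z)" "x = vdiff c z ! j" by (auto simp: in_set_conv_nth)
        then show "\<bar>x\<bar> \<le> int h" using a l assms by (simp add: vdiff_nth vdiff_len)
      qed
    qed
    have B: "(\<exists>x\<in>set (vdiff c z). \<bar>x\<bar> = int h) \<longleftrightarrow> (\<exists>j<d. \<bar>c!j - z!j\<bar> = int h)"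
    proof
      assume "\<exists>x\<in>set (vdiff c z). \<bar>x\<bar> = int h"
      then obtain x where "x \<in> set (vdiff c z)" "\<bar>x\<bar> = int h" by blast
      moreover from this obtain j where "j < length (vdiff c z)" "x = vdiff c z ! j" by (auto simp: in_set_conv_nth)
      ultimately show "\<exists>j<d. \<bar>c!j - z!j\<bar> = int h" using l assms by (auto simp: vdiff_nth vdiff_len)
    next
      assume "\<exists>j<d. \<bar>c!j - z!j\<bar> = int h"
      then obtain j where j: "j < d" "\<bar>c!j - z!j\<bar> = int h" by blast
      then have "vdiff c z ! j \<in> set (vdiff c z)" using l assms by (simp add: vdiff_len)
      then show "\<exists>x\<in>set (vdiff c z). \<bar>x\<bar> = int h" using j l assms by (auto simp: vdiff_nth)
    qed
    show ?thesis using linf_eq[OF h, of "vdiff c z"] A B True by simp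
  qed simp
  finally show ?thesis .
qed

lemma sum_list_unit: "j < n \<Longrightarrow> sum_list ((replicate n (0::int))[j := 1]) = 1"
proof (induction n arbitrary: j)
  case 0 then show ?case by simp
next
  case (Suc n)
  then show ?case by (cases j) (auto simp: sum_list_replicate)
qed

lemma l1_stp:
  assumes "length x = d" "j < d"
  shows "l1norm (vdiff x (stp x j)) = 1"
proof -
  have "map abs (vdiff x (stp x j)) = (replicate d 0)[j := 1]"
    by (rule nth_equalityI) (use assms in \<open>auto simp: vdiff_nth vdiff_len stp_nth nth_list_update\<close>)
  then show ?thesis using assms by (simp add: l1norm_def sum_list_unit)
qed

lemma stp_Ed:
  assumes "length x = d" "j < d"
  shows "{x, stp x j} \<in> Ed d"
proof -
  have "x \<in> Zd d" "stp x j \<in> Zd d" using assms by (auto simp: Zd_def)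
  then show ?thesis using l1_stp[OF assms] unfolding Ed_def by blast
qed

lemma sphE_iff:
  assumes "h \<noteq> 0"
  shows "f \<in> sphE d e h \<longleftrightarrow> (\<exists>u w. f = {u, w} \<and> {u, w} \<in> Ed d \<and> u \<in> sphV d e h \<and> w \<in> sphV d e h)"
  using assms by (auto simp: sphE_def)

lemma sphE_elem:
  assumes "h \<noteq> 0" "{a, b} \<in> sphE d e h"
  shows "a \<in> sphV d e h" "b \<in> sphV d e h"
  using assms by (auto simp: sphE_def doubleton_eq_iff)



definition flo :: "int list \<Rightarrow> nat \<Rightarrow> nat \<Rightarrow> int \<Rightarrow> nat \<Rightarrow> int" where
  "flo c h i s j = (if j = i then c!i + s * int h else c!j - int h)"
definition fhi :: "int list \<Rightarrow> nat \<Rightarrow> nat \<Rightarrow> int \<Rightarrow> nat \<Rightarrow> int" where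
  "fhi c h i s j = (if j = i then c!i + s * int h else c!j + int h)"
definition face :: "nat \<Rightarrow> int list \<Rightarrow> nat \<Rightarrow> nat \<Rightarrow> int \<Rightarrow> vtx set" where
  "face d c h i s = ibox d (flo c h i s) (fhi c h i s)"

context
  fixes d :: nat and e :: edge and h :: nat and c :: vtx
  assumes e: "e \<in> Ed d" and h: "h \<ge> 1" and c: "c = ve e"
begin

lemma lc: "length c = d" using ve_props[OF e] c by simp

lemma face_sub:
  assumes "i < d" "s \<in> {-1, 1}"
  shows "face d c h i s \<subseteq> sphV d e h"
proof
  fix z assume z: "z \<in> face d c h i s"
  then have lz: "length z = d" and b: "\<And>j. j < d \<Longrightarrow> flo c h i s j \<le> z!j \<and> z!j \<le> fhi c h i s j"
    by (auto simp: face_def ibox_def)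
  have "\<forall>j<d. \<bar>c!j - z!j\<bar> \<le> int h"
  proof (intro allI impI)
    fix j assume j: "j < d"
    show "\<bar>c!j - z!j\<bar> \<le> int h"
    proof (cases "j = i")
      case True then show ?thesis using b[OF j] assms(2) by (auto simp: flo_def fhi_def)
    next
      case False then show ?thesis using b[OF j] by (auto simp: flo_def fhi_def)
    qed
  qed
  moreover have "\<bar>c!i - z!i\<bar> = int h" using b[OF assms(1)] assms(2) by (auto simp: flo_def fhi_def)
  ultimately show "z \<in> sphV d e h" using sphV_iff[OF h lc c] lz assms(1) by blast
qed

lemma in_face:
  assumes "z \<in> sphV d e h"
  shows "\<exists>i<d. \<exists>s\<in>{-1,1}. z \<in> face d c h i s"
proof -
  have lz: "length z = d" and a: "\<forall>j<d. \<bar>c!j - z!j\<bar> \<le> int h" and "\<exists>j<d. \<bar>c!j - z!j\<bar> = int h"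
    using assms sphV_iff[OF h lc c] by auto
  then obtain i where i: "i < d" "\<bar>c!i - z!i\<bar> = int h" by blast
  define s where "s = (if c!i - z!i = int h then -1 else (1::int))"
  have zi: "z!i = c!i + s * int h" using i by (auto simp: s_def abs_if split: if_splits)
  have "z \<in> face d c h i s"
    unfolding face_def ibox_def using lz a zi by (auto simp: flo_def fhi_def abs_le_iff)
  moreover have "s \<in> {-1, 1}" by (simp add: s_def)
  ultimately show ?thesis using i(1) by blast
qed

lemma card_dirs:
  assumes "i < d"
  shows "card {j. j < d \<and> flo c h i s j < fhi c h i s j} = d - 1"
proof -
  have "{j. j < d \<and> flo c h i s j < fhi c h i s j} = {..<d} - {i}"
    using h by (auto simp: flo_def fhi_def)
  then show ?thesis using assms by simp
qed

lemma face_meet: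
  assumes "i < d" "j < d" "i \<noteq> j" "s \<in> {-1, 1}" "t \<in> {-1, 1}"
  shows "(c[i := c!i + s * int h])[j := c!j + t * int h] \<in> face d c h i s \<inter> face d c h j t"
  using assms lc h by (auto simp: face_def ibox_def flo_def fhi_def nth_list_update)

lemma bedges_sphE:
  assumes "i < d" "s \<in> {-1, 1}"
  shows "bedges d (flo c h i s) (fhi c h i s) A \<subseteq> sphE d e h"
proof
  fix f assume "f \<in> bedges d (flo c h i s) (fhi c h i s) A"
  then obtain x j where f: "f = {x, stp x j}" "j < d" "x \<in> face d c h i s" "stp x j \<in> face d c h i s"
    unfolding bedges_def face_def by blast
  have lx: "length x = d" using f(3) by (simp add: face_def ibox_def)
  have "x \<in> sphV d e h" "stp x j \<in> sphV d e h" using face_sub[OF assms] f by auto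
  then show "f \<in> sphE d e h" using stp_Ed[OF lx f(2)] f(1) h sphE_iff[of h] by auto
qed


lemma sphV_box:
  assumes "h \<le> k"
  shows "sphV d e h \<subseteq> ibox d (\<lambda>j. c!j - int k) (\<lambda>j. c!j + int k)"
proof
  fix z assume "z \<in> sphV d e h"
  then have "length z = d" "\<forall>j<d. \<bar>c!j - z!j\<bar> \<le> int h" using sphV_iff[OF h lc c] by auto
  then show "z \<in> ibox d (\<lambda>j. c!j - int k) (\<lambda>j. c!j + int k)" using assms
    by (force simp: ibox_def abs_le_iff)
qed

lemma finite_sphV: "finite (sphV d e h)"
  using sphV_box[of h] finite_box by (rule finite_subset) simp

lemma finite_sphE: "finite (sphE d e h)"
proof -
  have "sphE d e h \<subseteq> Pow (sphV d e h)" using h by (auto simp: sphE_def)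
  then show ?thesis using finite_sphV by (meson finite_Pow_iff finite_subset)
qed

lemma conn:
  assumes d2: "d \<ge> 2" and u: "u \<in> sphV d e h" and w: "w \<in> sphV d e h"
    and small: "card (Big \<inter> sphE d e h) < d - 1"
  shows "(u, w) \<in> {(x, y). {x, y} \<in> sphE d e h \<and> {x, y} \<notin> Big}\<^sup>*"
proof (rule ccontr)
  define R where "R = {(x, y). {x, y} \<in> sphE d e h \<and> {x, y} \<notin> Big}"
  define A where "A = {x. (u, x) \<in> R\<^sup>*}"
  assume "(u, w) \<notin> {(x, y). {x, y} \<in> sphE d e h \<and> {x, y} \<notin> Big}\<^sup>*"
  then have wA: "w \<notin> A" by (simp add: A_def R_def)
  have uA: "u \<in> A" by (simp add: A_def)
  have unif: "face d c h i s \<subseteq> A \<or> face d c h i s \<inter> A = {}" if i: "i < d" "s \<in> {-1, 1}" for i s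
  proof (rule ccontr)
    assume "\<not> (face d c h i s \<subseteq> A \<or> face d c h i s \<inter> A = {})"
    then obtain x y where xy: "x \<in> face d c h i s" "x \<in> A" "y \<in> face d c h i s" "y \<notin> A" by blast
    have "bedges d (flo c h i s) (fhi c h i s) A \<subseteq> Big \<inter> sphE d e h"
    proof
      fix f assume f: "f \<in> bedges d (flo c h i s) (fhi c h i s) A"
      then have fs: "f \<in> sphE d e h" using bedges_sphE[OF i] by blast
      from f obtain a j where a: "f = {a, stp a j}" "a \<in> A \<longleftrightarrow> stp a j \<notin> A"
        unfolding bedges_def by blast
      have "f \<in> Big"
      proof (rule ccontr)
        assume "f \<notin> Big"
        then have "(a, stp a j) \<in> R" "(stp a j, a) \<in> R" using fs a(1) by (auto simp: R_def insert_commute)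
        then have "a \<in> A \<longleftrightarrow> stp a j \<in> A" unfolding A_def mem_Collect_eq by (meson rtrancl_into_rtrancl)
        then show False using a(2) by blast
      qed
      then show "f \<in> Big \<inter> sphE d e h" using fs by blast
    qed
    then have "card (bedges d (flo c h i s) (fhi c h i s) A) \<le> card (Big \<inter> sphE d e h)"
      using finite_sphE by (intro card_mono) auto
    moreover have "card {j. j < d \<and> flo c h i s j < fhi c h i s j} \<le> card (bedges d (flo c h i s) (fhi c h i s) A)"
      using box_boundary[of x d "flo c h i s" "fhi c h i s" A y] xy by (simp add: face_def)
    ultimately show False using card_dirs[OF i(1), of s] small by simp
  qed
  have link: "face d c h i s \<subseteq> A \<longleftrightarrow> face d c h j t \<subseteq> A"
    if "i < d" "j < d" "i \<noteq> j" "s \<in> {-1, 1}" "t \<in> {-1, 1}" for i j s t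
  proof -
    let ?z = "(c[i := c!i + s * int h])[j := c!j + t * int h]"
    have z: "?z \<in> face d c h i s" "?z \<in> face d c h j t" using face_meet[OF that] by auto
    show ?thesis
    proof (cases "?z \<in> A")
      case True
      then show ?thesis using unif[OF that(1,4)] unif[OF that(2,5)] z by blast
    next
      case False
      then show ?thesis using z by blast
    qed
  qed
  have ref: "face d c h i s \<subseteq> A \<longleftrightarrow> face d c h 0 1 \<subseteq> A" if "i < d" "s \<in> {-1, 1}" for i s
  proof (cases "i = 0")
    case True
    have "face d c h i s \<subseteq> A \<longleftrightarrow> face d c h 1 1 \<subseteq> A" using link[of i 1 s 1] that True d2 by simp
    also have "\<dots> \<longleftrightarrow> face d c h 0 1 \<subseteq> A" using link[of 1 0 1 1] d2 by simp
    finally show ?thesis .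
  next
    case False
    then show ?thesis using link[of i 0 s 1] that d2 by simp
  qed
  obtain iu su where fu: "iu < d" "su \<in> {-1, 1}" "u \<in> face d c h iu su" using in_face[OF u] by blast
  obtain iw sw where fw: "iw < d" "sw \<in> {-1, 1}" "w \<in> face d c h iw sw" using in_face[OF w] by blast
  have "face d c h iu su \<subseteq> A" using unif[OF fu(1,2)] fu(3) uA by blast
  moreover have "\<not> face d c h iw sw \<subseteq> A" using fw(3) wA by blast
  ultimately show False using ref[OF fu(1,2)] ref[OF fw(1,2)] by simp
qed

end



lemma rtrancl_path:
  assumes "(u, w) \<in> R\<^sup>*"
  shows "\<exists>p. p \<noteq> [] \<and> hd p = u \<and> last p = w \<and> distinct p \<and> (\<forall>i < length p - 1. (p!i, p!Suc i) \<in> R)"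
  using assms
proof (induction rule: converse_rtrancl_induct)
  case base
  then show ?case by (intro exI[of _ "[w]"]) auto
next
  case (step x y)
  then obtain q where q: "q \<noteq> []" "hd q = y" "last q = w" "distinct q" "\<forall>i < length q - 1. (q!i, q!Suc i) \<in> R"
    by blast
  show ?case
  proof (cases "x \<in> set q")
    case True
    then obtain n where n: "n < length q" "q!n = x" by (auto simp: in_set_conv_nth)
    let ?p = "drop n q"
    have "?p \<noteq> []" using n by simp
    moreover have "hd ?p = x" using n by (simp add: hd_drop_conv_nth)
    moreover have "last ?p = w" using n q by simp
    moreover have "distinct ?p" using q by simp
    moreover have "\<forall>i < length ?p - 1. (?p!i, ?p!Suc i) \<in> R"
    proof (intro allI impI)
      fix i assume "i < length ?p - 1"
      then have "n + i < length q - 1" using n by simp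
      then have "(q!(n+i), q!Suc (n+i)) \<in> R" using q by blast
      then show "(?p!i, ?p!Suc i) \<in> R" using n by simp
    qed
    ultimately show ?thesis by blast
  next
    case False
    let ?p = "x # q"
    have "distinct ?p" using q False by simp
    moreover have "last ?p = w" using q by simp
    moreover have "\<forall>i < length ?p - 1. (?p!i, ?p!Suc i) \<in> R"
    proof (intro allI impI)
      fix i assume i: "i < length ?p - 1"
      show "(?p!i, ?p!Suc i) \<in> R"
      proof (cases i)
        case 0
        then show ?thesis using q step(1) by (simp add: hd_conv_nth)
      next
        case (Suc i')
        then have "i' < length q - 1" using i by simp
        then show ?thesis using q Suc by simp
      qed
    qed
    ultimately show ?thesis by (intro exI[of _ ?p]) simp
  qed
qed

lemma card_ibox:
  assumes "\<And>j. j < d \<Longrightarrow> hi j \<le> lo j + int m"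
  shows "card (ibox d lo hi) \<le> (m + 1) ^ d"
proof -
  define L where "L = map lo [0..<d]"
  define S where "S = {xs. set xs \<subseteq> {0..int m} \<and> length xs = d}"
  have "ibox d lo hi \<subseteq> (\<lambda>xs. map2 (+) xs L) ` S"
  proof
    fix z assume z: "z \<in> ibox d lo hi"
    then have lz: "length z = d" and b: "\<And>j. j < d \<Longrightarrow> lo j \<le> z!j \<and> z!j \<le> hi j" by (auto simp: ibox_def)
    let ?x = "map2 (-) z L"
    have "?x \<in> S"
    proof -
      have "\<forall>y\<in>set ?x. y \<in> {0..int m}"
      proof
        fix y assume "y \<in> set ?x"
        then obtain j where j: "j < length ?x" "y = ?x ! j" by (auto simp: in_set_conv_nth)
        then have jd: "j < d" using lz by (simp add: L_def)
        then have "y = z!j - lo j" using j lz by (simp add: L_def)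
        then show "y \<in> {0..int m}" using b[OF jd] assms[OF jd] by simp
      qed
      then show ?thesis using lz by (auto simp: S_def L_def)
    qed
    moreover have "z = map2 (+) ?x L"
      by (rule nth_equalityI) (use lz in \<open>auto simp: L_def\<close>)
    ultimately show "z \<in> (\<lambda>xs. map2 (+) xs L) ` S" by blast
  qed
  then have "card (ibox d lo hi) \<le> card ((\<lambda>xs. map2 (+) xs L) ` S)"
    by (intro card_mono finite_imageI) (auto simp: S_def intro!: finite_lists_length_eq)
  also have "\<dots> \<le> card S" by (rule card_image_le) (auto simp: S_def intro!: finite_lists_length_eq)
  also have "card S = (m + 1) ^ d" unfolding S_def by (subst card_lists_length_eq) (auto simp: nat_add_distrib)
  finally show ?thesis .
qed

context
  fixes d :: nat and e :: edge and h :: nat and c :: vtx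
  assumes e: "e \<in> Ed d" and h: "h \<ge> 1" and c: "c = ve e"
begin

lemma card_sphV:
  assumes "h \<le> k"
  shows "card (sphV d e h) \<le> (2 * k + 1) ^ d"
proof -
  have "card (sphV d e h) \<le> card (ibox d (\<lambda>j. c!j - int k) (\<lambda>j. c!j + int k))"
    using sphV_box[OF e h c assms] finite_box by (rule card_mono[rotated])
  also have "\<dots> \<le> (2 * k + 1) ^ d" by (rule card_ibox) simp
  finally show ?thesis .
qed

lemma saw_set:
  assumes "saw (sphE d e h) u w p" "w \<in> sphV d e h"
  shows "set p \<subseteq> sphV d e h"
proof
  fix x assume "x \<in> set p"
  then obtain i where i: "i < length p" "x = p!i" by (auto simp: in_set_conv_nth)
  show "x \<in> sphV d e h"
  proof (cases "i < length p - 1")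
    case True
    then have "{p!i, p!Suc i} \<in> sphE d e h" using assms(1) by (simp add: saw_def)
    then show ?thesis using sphE_elem[of h] h i by auto
  next
    case False
    then have "i = length p - 1" using i by simp
    moreover have "p \<noteq> []" using i by auto
    ultimately have "x = last p" using i by (simp add: last_conv_nth)
    then show ?thesis using assms by (simp add: saw_def)
  qed
qed

lemma finite_saw:
  assumes "w \<in> sphV d e h"
  shows "finite {p. saw (sphE d e h) u w p}"
proof -
  have "{p. saw (sphE d e h) u w p} \<subseteq> {p. set p \<subseteq> sphV d e h \<and> distinct p}"
    using saw_set[OF _ assms] by (auto simp: saw_def)
  then show ?thesis using finite_subset_distinct[OF finite_sphV[OF e h c]] by (rule finite_subset)
qed

lemma sphere_big:
  assumes d2: "d \<ge> 2" and hk: "h \<le> k" and M: "M > 0"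
    and u: "u \<in> sphV d e h" and w: "w \<in> sphV d e h"
    and T: "M \<le> passT t (sphE d e h) u w"
  shows "d - 1 \<le> card ({f. M / real ((2 * k + 1) ^ d) \<le> t f} \<inter> sphE d e h)"
proof (rule ccontr)
  define L where "L = real ((2 * k + 1) ^ d)"
  define \<theta> where "\<theta> = M / L"
  have L: "L > 0" by (simp add: L_def)
  define Big where "Big = {f. \<theta> \<le> t f}"
  assume "\<not> d - 1 \<le> card ({f. M / real ((2 * k + 1) ^ d) \<le> t f} \<inter> sphE d e h)"
  then have cs: "card (Big \<inter> sphE d e h) < d - 1" by (simp add: Big_def \<theta>_def L_def)
  define R where "R = {(x, y). {x, y} \<in> sphE d e h \<and> {x, y} \<notin> Big}"
  have "(u, w) \<in> R\<^sup>*" using conn[OF e h c d2 u w cs] unfolding R_def .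
  from rtrancl_path[OF this]
  obtain p where p: "p \<noteq> []" "hd p = u" "last p = w" "distinct p"
     "\<forall>i < length p - 1. (p!i, p!Suc i) \<in> R"
    by blast
  have sw: "saw (sphE d e h) u w p" unfolding saw_def
  proof (intro conjI allI impI)
    fix i assume "i < length p - 1"
    then have "(p!i, p!Suc i) \<in> R" using p(5) by blast
    then show "{p!i, p!Suc i} \<in> sphE d e h" by (simp add: R_def)
  qed (use p in auto)
  have small: "t {p!i, p!Suc i} < \<theta>" if "i < length p - 1" for i
  proof -
    have "(p!i, p!Suc i) \<in> R" using p(5) that by blast
    then show ?thesis by (simp add: R_def Big_def)
  qed
  have "length p = card (set p)" using p(4) by (simp add: distinct_card)
  also have "\<dots> \<le> card (sphV d e h)" using saw_set[OF sw w] finite_sphV[OF e h c] by (rule card_mono[rotated])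
  also have "\<dots> \<le> (2 * k + 1) ^ d" by (rule card_sphV[OF hk])
  finally have lp: "real (length p - 1) \<le> L" unfolding L_def by linarith
  have pw: "path_weight t p < M"
  proof (cases "length p - 1 = 0")
    case True then show ?thesis using M by (simp add: path_weight_def)
  next
    case False
    have "path_weight t p < (\<Sum>i < length p - 1. \<theta>)"
    proof -
      have "0 \<in> {..<length p - 1}" using False by simp
      then have ne: "{..<length p - 1} \<noteq> {}" by blast
      show ?thesis unfolding path_weight_def using small by (intro sum_strict_mono[OF _ ne]) auto
    qed
    also have "\<dots> = real (length p - 1) * \<theta>" by simp
    also have "\<dots> \<le> L * \<theta>" using lp M L by (intro mult_right_mono) (auto simp: \<theta>_def)
    also have "\<dots> = M" using L by (simp add: \<theta>_def)
    finally show ?thesis .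
  qed
  have "passT t (sphE d e h) u w \<le> path_weight t p"
    unfolding passT_def
  proof (rule cInf_lower)
    show "path_weight t p \<in> {path_weight t p |p. saw (sphE d e h) u w p}" using sw by blast
    have "{path_weight t p |p. saw (sphE d e h) u w p} = path_weight t ` {p. saw (sphE d e h) u w p}" by blast
    then show "bdd_below {path_weight t p |p. saw (sphE d e h) u w p}"
      using finite_saw[OF w] by (simp add: bdd_below_finite)
  qed
  then show False using pw T by simp
qed

end



lemma sphE_disj:
  assumes "h1 \<noteq> 0" "h2 \<noteq> 0" "h1 \<noteq> h2"
  shows "sphE d e h1 \<inter> sphE d e h2 = {}"
proof (rule ccontr)
  assume "sphE d e h1 \<inter> sphE d e h2 \<noteq> {}"
  then obtain f where f1: "f \<in> sphE d e h1" and f2: "f \<in> sphE d e h2" by blast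
  from f1 obtain a b where ab: "f = {a, b}" using assms(1) by (auto simp: sphE_def)
  have "a \<in> sphV d e h1" using sphE_elem[OF assms(1)] f1 ab by auto
  moreover have "a \<in> sphV d e h2" using sphE_elem[OF assms(2)] f2 ab by auto
  ultimately show False using assms by (simp add: sphV_def)
qed

theorem lemma3p2:
  fixes d k :: nat
  assumes "d \<ge> 2"
  shows "\<exists>C::real. C > 0 \<and> (\<exists>C'::real. C' \<ge> 1 \<and>
    (\<forall>(\<mu> :: real measure) (M :: real).
       prob_space \<mu> \<and> sets \<mu> = sets borel \<and> (AE x in \<mu>. 0 \<le> x) \<and> M > 0 \<longrightarrow>
       (\<forall>e \<in> Ed d.
          measure (\<Pi>\<^sub>M f \<in> Ed d. \<mu>)
            {\<omega> \<in> space (\<Pi>\<^sub>M f \<in> Ed d. \<mu>). large d \<omega> e k M}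
          \<le> C * (measure \<mu> {M / C'..} ^ k) ^ (d - 1))))"
proof -
  define N where "N = (2 * k + 1) ^ d"
  define C where "C = real (2 ^ (2 ^ N))"
  define C' where "C' = real N"
  have N1: "N \<ge> 1" by (simp add: N_def)
  have main: "measure (\<Pi>\<^sub>M f \<in> Ed d. \<mu>) {\<omega> \<in> space (\<Pi>\<^sub>M f \<in> Ed d. \<mu>). large d \<omega> e k M}
          \<le> C * (measure \<mu> {M / C'..} ^ k) ^ (d - 1)"
    if mu: "prob_space \<mu>" and sets_mu: "sets \<mu> = sets borel" and M: "M > 0" and e: "e \<in> Ed d"
    for \<mu> :: "real measure" and M e
  proof -
    interpret P: product_prob_space "\<lambda>_. \<mu>" "Ed d"
      by (rule product_prob_spaceI) (rule mu)
    define c where "c = ve e"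
    define \<theta> where "\<theta> = M / C'"
    define p where "p = measure \<mu> {\<theta>..}"
    define Bk where "Bk = ibox d (\<lambda>j. c!j - int k) (\<lambda>j. c!j + int k)"
    define W where "W = (\<Union>h\<in>{1..k}. sphE d e h)"
    define \<G> where "\<G> = {G. G \<subseteq> W \<and> card G = k * (d - 1)}"
    define cyl where "cyl G = prod_emb (Ed d) (\<lambda>_. \<mu>) G (\<Pi>\<^sub>E f\<in>G. {\<theta>..})" for G
    let ?P = "\<Pi>\<^sub>M f \<in> Ed d. \<mu>"
    have WE: "W \<subseteq> Ed d" unfolding W_def by (auto simp: sphE_def)
    have WB: "W \<subseteq> Pow Bk"
    proof
      fix f assume "f \<in> W"
      then obtain h where h: "h \<in> {1..k}" "f \<in> sphE d e h" by (auto simp: W_def)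
      then obtain a b where ab: "f = {a, b}" by (auto simp: sphE_def)
      have "a \<in> sphV d e h" "b \<in> sphV d e h" using sphE_elem[of h] h ab by auto
      then show "f \<in> Pow Bk" using sphV_box[OF e _ c_def, of h k] h ab by (auto simp: Bk_def)
    qed
    have finW: "finite W" using WB finite_box[of d] by (metis Bk_def finite_Pow_iff finite_subset)
    have cBk: "card Bk \<le> N" unfolding Bk_def N_def by (rule card_ibox) simp
    have "card W \<le> card (Pow Bk)" using WB finite_box by (intro card_mono) (auto simp: Bk_def)
    also have "\<dots> = 2 ^ card Bk" using finite_box by (simp add: card_Pow Bk_def)
    also have "\<dots> \<le> 2 ^ N" using cBk by (intro power_increasing) auto
    finally have cW: "card W \<le> 2 ^ N" .
    have GP: "\<G> \<subseteq> Pow W" by (auto simp: \<G>_def)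
    have finG: "finite \<G>" using GP finW by (meson finite_Pow_iff finite_subset)
    have "card \<G> \<le> card (Pow W)" using GP finW by (intro card_mono) auto
    also have "\<dots> = 2 ^ card W" using finW by (simp add: card_Pow)
    also have "\<dots> \<le> 2 ^ (2 ^ N)" using cW by (intro power_increasing) auto
    finally have cG: "card \<G> \<le> 2 ^ (2 ^ N)" .
    have finG': "finite G" if "G \<in> \<G>" for G using that finW by (auto simp: \<G>_def intro: finite_subset)
    have cyl_sets: "cyl G \<in> sets ?P" if "G \<in> \<G>" for G
      unfolding cyl_def using finG'[OF that] that WE sets_mu
      by (intro sets_PiM_I) (auto simp: \<G>_def)
    have cyl_meas: "measure ?P (cyl G) = p ^ (k * (d - 1))" if "G \<in> \<G>" for G
    proof -
      have "measure ?P (cyl G) = (\<Prod>f\<in>G. measure \<mu> {\<theta>..})"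
        unfolding cyl_def using finG'[OF that] that WE sets_mu
        by (intro P.measure_PiM_emb) (auto simp: \<G>_def)
      also have "\<dots> = p ^ card G" by (simp add: p_def)
      finally show ?thesis using that by (simp add: \<G>_def)
    qed
    have sub: "{\<omega> \<in> space ?P. large d \<omega> e k M} \<subseteq> (\<Union>G\<in>\<G>. cyl G)"
    proof
      fix \<omega> assume "\<omega> \<in> {\<omega> \<in> space ?P. large d \<omega> e k M}"
      then have \<omega>: "\<omega> \<in> space ?P" and lg: "large d \<omega> e k M" by auto
      have "\<forall>h\<in>{1..k}. \<exists>F. F \<subseteq> {f. \<theta> \<le> \<omega> f} \<inter> sphE d e h \<and> card F = d - 1 \<and> finite F"
      proof
        fix h assume h: "h \<in> {1..k}"
        then obtain u w where uw: "u \<in> sphV d e h" "w \<in> sphV d e h" "M \<le> passT \<omega> (sphE d e h) u w"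
          using lg unfolding large_def by auto
        have h1: "h \<ge> 1" "h \<le> k" using h by auto
        have "d - 1 \<le> card ({f. M / real ((2 * k + 1) ^ d) \<le> \<omega> f} \<inter> sphE d e h)"
          using sphere_big[OF e h1(1) c_def assms h1(2) M uw] .
        then have "d - 1 \<le> card ({f. \<theta> \<le> \<omega> f} \<inter> sphE d e h)"
          by (simp add: \<theta>_def C'_def N_def)
        then obtain F where "F \<subseteq> {f. \<theta> \<le> \<omega> f} \<inter> sphE d e h" "card F = d - 1" "finite F"
          by (rule obtain_subset_with_card_n)
        then show "\<exists>F. F \<subseteq> {f. \<theta> \<le> \<omega> f} \<inter> sphE d e h \<and> card F = d - 1 \<and> finite F" by blast
      qed
      then obtain F where F: "\<And>h. h \<in> {1..k} \<Longrightarrow> F h \<subseteq> {f. \<theta> \<le> \<omega> f} \<inter> sphE d e h \<and> card (F h) = d - 1 \<and> finite (F h)"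
        by metis
      define G where "G = (\<Union>h\<in>{1..k}. F h)"
      have "card G = (\<Sum>h\<in>{1..k}. card (F h))" unfolding G_def
      proof (rule card_UN_disjoint)
        show "\<forall>i\<in>{1..k}. \<forall>j\<in>{1..k}. i \<noteq> j \<longrightarrow> F i \<inter> F j = {}"
        proof (intro ballI impI)
          fix i j assume ij: "i \<in> {1..k}" "j \<in> {1..k}" "i \<noteq> j"
          have "F i \<inter> F j \<subseteq> sphE d e i \<inter> sphE d e j" using F[OF ij(1)] F[OF ij(2)] by blast
          also have "\<dots> = {}" using sphE_disj[of i j d e] ij by auto
          finally show "F i \<inter> F j = {}" by blast
        qed
      qed (use F in auto)
      also have "\<dots> = k * (d - 1)" using F by simp
      finally have cardG: "card G = k * (d - 1)" .
      have GW: "G \<subseteq> W" unfolding G_def W_def using F by blast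
      have big: "\<forall>f\<in>G. \<theta> \<le> \<omega> f" unfolding G_def using F by blast
      have "G \<in> \<G>" using GW cardG by (simp add: \<G>_def)
      moreover have "\<omega> \<in> cyl G"
        unfolding cyl_def prod_emb_def using \<omega> big by (simp add: restrict_PiE_iff space_PiM)
      ultimately show "\<omega> \<in> (\<Union>G\<in>\<G>. cyl G)" by blast
    qed
    have "measure ?P {\<omega> \<in> space ?P. large d \<omega> e k M} \<le> measure ?P (\<Union>G\<in>\<G>. cyl G)"
      using sub finG cyl_sets by (intro P.finite_measure_mono) auto
    also have "\<dots> \<le> (\<Sum>G\<in>\<G>. measure ?P (cyl G))"
      using finG cyl_sets by (intro measure_UNION_le) auto
    also have "\<dots> = real (card \<G>) * p ^ (k * (d - 1))" using cyl_meas by simp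
    also have "\<dots> \<le> C * p ^ (k * (d - 1))"
    proof (rule mult_right_mono)
      show "real (card \<G>) \<le> C" unfolding C_def using cG by (simp only: of_nat_le_iff)
      show "0 \<le> p ^ (k * (d - 1))" by (simp add: p_def)
    qed
    also have "\<dots> = C * (measure \<mu> {M / C'..} ^ k) ^ (d - 1)"
      by (simp add: p_def \<theta>_def power_mult)
    finally show ?thesis .
  qed
  show ?thesis
  proof (intro exI conjI allI impI ballI)
    show "C > 0" by (simp add: C_def)
    show "C' \<ge> 1" using N1 by (simp add: C'_def)
  next
    fix \<mu> :: "real measure" and M :: real and e
    assume "prob_space \<mu> \<and> sets \<mu> = sets borel \<and> (AE x in \<mu>. 0 \<le> x) \<and> M > 0" "e \<in> Ed d"
    then show "measure (\<Pi>\<^sub>M f \<in> Ed d. \<mu>) {\<omega> \<in> space (\<Pi>\<^sub>M f \<in> Ed d. \<mu>). large d \<omega> e k M}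
          \<le> C * (measure \<mu> {M / C'..} ^ k) ^ (d - 1)" using main by blast
  qed
qed


end
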